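(* Let $\mathbb{K}$ be an algebraically closed field of characteristic zero, $\mathcal{C}\subset\mathbb{K}^2$ an affine irreducible plane curve defined by an irreducible polynomial $f(y_1,y_2)$, $A=(a,b)\in\mathbb{K}^2$ and $d\in\mathbb{K}\setminus\{0\}$. Let $\mathfrak{B}(\mathcal{C},A,d)\subset\mathbb{K}^2\times\mathbb{K}^2\times\mathbb{K}$ be the set of $(\bar x,\bar y,w)$, $\bar x=(x_1,x_2)$, $\bar y=(y_1,y_2)$, satisfying $f(y_1,y_2)=0$, $(x_1-y_1)^2+(x_2-y_2)^2=d^2$, $(y_2-b)(x_1-y_1)-(y_1-a)(x_2-y_2)=0$, $w\big((y_1-a)^2+(y_2-b)^2\big)=1$, and let $\pi_1(\bar x,\bar y,w)=\bar x$, $\pi_2(\bar x,\bar y,w)=\bar y$ be the projections restricted to $\mathfrak{B}(\mathcal{C},A,d)$. Let $\mathcal{C}_0=\{(p_1,p_2)\in\mathcal{C}:(p_1-a)^2+(p_2-b)^2\neq0\}$. Then: (1) If $\mathcal{C}$ is not the circle $(y_1-a)^2+(y_2-b)^2=d^2$, then (1.1) for every $\bar x\in\pi_1(\mathfrak{B}(\mathcal{C},A,d))\setminus\{A\}$ one has $\mathrm{Card}(\pi_1^{-1}(\bar x))\le 2$, and (1.2) if $A\in\pi_1(\mathfrak{B}(\mathcal{C},A,d))$ then $\mathrm{Card}(\pi_1^{-1}(A))\le 2\deg(\mathcal{C})$. (2) For every $\bar y\in\mathcal{C}_0$, $\mathrm{Card}(\pi_2^{-1}(\bar y))=2$.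
   Context: $\deg(\mathcal{C})$ is the degree of $f$. *)

theory Defs
  imports "HOL-Computational_Algebra.Polynomial_Factorial"
begin

text \<open>Bivariate polynomials in y1, y2 are represented as nested univariate polynomials
  'a poly poly: the outer variable is y2, the coefficients are polynomials in y1.\<close>

definition eval2 :: "'a::comm_semiring_1 poly poly \<Rightarrow> 'a \<Rightarrow> 'a \<Rightarrow> 'a" where
  "eval2 f y1 y2 = poly (poly f [:y2:]) y1"

definition total_degree :: "'a::zero poly poly \<Rightarrow> nat" where
  "total_degree f = Max (insert 0 {i + degree (coeff f i) | i. coeff f i \<noteq> 0})"

definition alg_closed_field :: "'a::field itself \<Rightarrow> bool" where
  "alg_closed_field _ \<longleftrightarrow> (\<forall>p::'a poly. degree p > 0 \<longrightarrow> (\<exists>z. poly p z = 0))"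

definition curve :: "'a::comm_semiring_1 poly poly \<Rightarrow> ('a \<times> 'a) set" where
  "curve f = {(y1, y2). eval2 f y1 y2 = 0}"

definition incidence_B ::
  "'a::field poly poly \<Rightarrow> 'a \<times> 'a \<Rightarrow> 'a \<Rightarrow> (('a \<times> 'a) \<times> ('a \<times> 'a) \<times> 'a) set" where
  "incidence_B f A d = {((x1, x2), (y1, y2), w).
      eval2 f y1 y2 = 0 \<and>
      (x1 - y1)^2 + (x2 - y2)^2 = d^2 \<and>
      (y2 - snd A) * (x1 - y1) - (y1 - fst A) * (x2 - y2) = 0 \<and>
      w * ((y1 - fst A)^2 + (y2 - snd A)^2) = 1}"

definition pi1 :: "('a \<times> 'a) \<times> ('a \<times> 'a) \<times> 'a \<Rightarrow> 'a \<times> 'a" where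
  "pi1 t = fst t"

definition pi2 :: "('a \<times> 'a) \<times> ('a \<times> 'a) \<times> 'a \<Rightarrow> 'a \<times> 'a" where
  "pi2 t = fst (snd t)"

end

theory Submission
  imports Defs
begin


lemma sqrt_ex:
  fixes c :: "'a::field"
  assumes "alg_closed_field TYPE('a)"
  shows "\<exists>r. r^2 = c"
proof -
  have "degree [:-c, 0, 1::'a:] > 0" by simp
  then obtain z where "poly [:-c, 0, 1:] z = 0" using assms unfolding alg_closed_field_def by blast
  then show ?thesis by (auto simp: power2_eq_square algebra_simps)
qed

lemma par:
  fixes e1 e2 z1 z2 :: "'a::field"
  assumes "(e1,e2) \<noteq> (0,0)" "e2*z1 = e1*z2"
  shows "\<exists>t. z1 = t*e1 \<and> z2 = t*e2"
proof (cases "e1 = 0")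
  case True
  then have "e2 \<noteq> 0" using assms by auto
  then show ?thesis using assms True
    by (intro exI[of _ "z2/e2"]) (auto simp: field_simps)
next
  case False
  then show ?thesis using assms
    by (intro exI[of _ "z1/e1"]) (auto simp: field_simps)
qed

lemma sq_eq_card:
  fixes c :: "'a::field"
  shows "finite {t. t^2 = c} \<and> card {t. t^2 = c} \<le> 2"
proof (cases "\<exists>t0. t0^2 = c")
  case False then show ?thesis by auto
next
  case True
  then obtain t0 where t0: "t0^2 = c" by auto
  have "{t. t^2 = c} \<subseteq> {t0, -t0}"
  proof
    fix t assume "t \<in> {t. t^2 = c}"
    then have "(t - t0)*(t+t0) = 0" using t0 by (simp add: power2_eq_square algebra_simps)
    then show "t \<in> {t0, -t0}" by (auto simp: eq_neg_iff_add_eq_0)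
  qed
  moreover have "card {t0, -t0} \<le> 2" by (simp add: card_insert_le_m1)
  ultimately show ?thesis by (meson card_mono finite.emptyI finite_insert finite_subset order_trans)
qed



lemma poly_upto:
  fixes p :: "'a::comm_semiring_1 poly"
  assumes "degree p \<le> n"
  shows "poly p x = (\<Sum>i\<le>n. coeff p i * x ^ i)"
proof -
  have "(\<Sum>i\<le>degree p. coeff p i * x ^ i) = (\<Sum>i\<le>n. coeff p i * x ^ i)"
    by (rule sum.mono_neutral_left) (use assms in \<open>auto simp: coeff_eq_0\<close>)
  then show ?thesis by (simp add: poly_altdef)
qed

lemma td_bound:
  fixes f :: "'a::zero poly poly"
  assumes "coeff (coeff f k) j \<noteq> 0"
  shows "k + j \<le> total_degree f"
proof -
  have ck: "coeff f k \<noteq> 0" using assms by auto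
  have fin: "finite {i + degree (coeff f i) | i. coeff f i \<noteq> 0}"
  proof (rule finite_subset)
    show "{i + degree (coeff f i) | i. coeff f i \<noteq> 0} \<subseteq> (\<lambda>i. i + degree (coeff f i)) ` {..degree f}"
      using le_degree by fastforce
  qed auto
  have "j \<le> degree (coeff f k)" using assms le_degree by blast
  moreover have "k + degree (coeff f k) \<le> total_degree f"
    unfolding total_degree_def using fin ck by (intro Max_ge) auto
  ultimately show ?thesis by simp
qed

lemma eval2_sum:
  fixes f :: "'a::comm_semiring_1 poly poly"
  assumes bnd: "\<And>k j. coeff (coeff f k) j \<noteq> 0 \<Longrightarrow> k + j \<le> n"
  shows "eval2 f y1 y2 = (\<Sum>k\<le>n. \<Sum>j\<le>n. coeff (coeff f k) j * y1^j * y2^k)"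
proof -
  have dk: "degree (coeff f k) \<le> n" for k
  proof (cases "coeff f k = 0")
    case False
    then have "coeff (coeff f k) (degree (coeff f k)) \<noteq> 0" by simp
    then show ?thesis using bnd by fastforce
  qed simp
  have df: "degree f \<le> n"
  proof (cases "f = 0")
    case False
    then have "coeff f (degree f) \<noteq> 0" by simp
    then have "coeff (coeff f (degree f)) (degree (coeff f (degree f))) \<noteq> 0" by simp
    then show ?thesis using bnd by fastforce
  qed simp
  have "eval2 f y1 y2 = poly (\<Sum>k\<le>n. coeff f k * [:y2:] ^ k) y1"
    unfolding eval2_def using poly_upto[OF df] by metis
  also have "\<dots> = (\<Sum>k\<le>n. poly (coeff f k) y1 * y2 ^ k)"
    by (simp add: poly_sum poly_power)
  also have "\<dots> = (\<Sum>k\<le>n. (\<Sum>j\<le>n. coeff (coeff f k) j * y1^j) * y2 ^ k)"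
    using poly_upto[OF dk] by metis
  also have "\<dots> = (\<Sum>k\<le>n. \<Sum>j\<le>n. coeff (coeff f k) j * y1^j * y2^k)"
    by (simp add: sum_distrib_right)
  finally show ?thesis .
qed

definition Xp :: "'a::field \<Rightarrow> 'a \<Rightarrow> 'a poly" where "Xp a d = [: d^2/2, a, 1/2 :]"
definition Yp :: "'a::field \<Rightarrow> 'a \<Rightarrow> 'a \<Rightarrow> 'a poly" where "Yp i b d = [: -(d^2)/(2*i), b, 1/(2*i) :]"
definition PP :: "'a::field poly poly \<Rightarrow> nat \<Rightarrow> 'a \<Rightarrow> 'a \<Rightarrow> 'a \<Rightarrow> 'a \<Rightarrow> 'a poly" where
  "PP f n a b d i = (\<Sum>k\<le>n. \<Sum>j\<le>n. smult (coeff (coeff f k) j) (monom 1 (n-k-j) * Xp a d ^ j * Yp i b d ^ k))"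

lemma PP_degree:
  assumes bnd: "\<And>k j. coeff (coeff f k) j \<noteq> 0 \<Longrightarrow> k + j \<le> n"
  shows "degree (PP f n a b d i) \<le> 2*n"
  unfolding PP_def
proof (rule degree_sum_le[OF finite_atMost], rule degree_sum_le[OF finite_atMost])
  fix k j
  show "degree (smult (coeff (coeff f k) j) (monom 1 (n-k-j) * Xp a d ^ j * Yp i b d ^ k)) \<le> 2*n"
  proof (cases "coeff (coeff f k) j = 0")
    case False
    then have kj: "k + j \<le> n" using bnd by auto
    have dX: "degree (Xp a d) \<le> 2" unfolding Xp_def by simp
    have dY: "degree (Yp i b d) \<le> 2" unfolding Yp_def by simp
    have "degree (monom (1::'a) (n-k-j) * Xp a d ^ j * Yp i b d ^ k)
        \<le> degree (monom (1::'a) (n-k-j)) + degree (Xp a d ^ j) + degree (Yp i b d ^ k)"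
      by (meson add_le_mono degree_mult_le le_refl order_trans)
    also have "\<dots> \<le> (n-k-j) + j * 2 + k * 2"
      by (intro add_mono degree_monom_le order_trans[OF degree_power_le]) (use dX dY in auto)
    also have "\<dots> \<le> 2*n" using kj by simp
    finally show ?thesis by (meson degree_smult_le order_trans)
  qed simp
qed

lemma PP_eval:
  fixes f :: "'a::field poly poly"
  assumes bnd: "\<And>k j. coeff (coeff f k) j \<noteq> 0 \<Longrightarrow> k + j \<le> n"
    and u: "u \<noteq> 0" and i: "i \<noteq> 0"
  shows "poly (PP f n a b d i) u = u^n * eval2 f (poly (Xp a d) u / u) (poly (Yp i b d) u / u)"
proof -
  have "u^n * eval2 f (poly (Xp a d) u / u) (poly (Yp i b d) u / u) =
    (\<Sum>k\<le>n. \<Sum>j\<le>n. u^n * (coeff (coeff f k) j * (poly (Xp a d) u / u)^j * (poly (Yp i b d) u / u)^k))"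
    by (simp add: eval2_sum[OF bnd] sum_distrib_left)
  also have "\<dots> = (\<Sum>k\<le>n. \<Sum>j\<le>n. coeff (coeff f k) j * (u^(n-k-j) * poly (Xp a d) u ^ j * poly (Yp i b d) u ^ k))"
  proof (intro sum.cong refl)
    fix k j
    show "u^n * (coeff (coeff f k) j * (poly (Xp a d) u / u)^j * (poly (Yp i b d) u / u)^k) =
      coeff (coeff f k) j * (u^(n-k-j) * poly (Xp a d) u ^ j * poly (Yp i b d) u ^ k)"
    proof (cases "coeff (coeff f k) j = 0")
      case False
      then have kj: "k + j \<le> n" using bnd by auto
      then have "u^n = u^(n-k-j) * u^j * u^k" by (simp flip: power_add)
      then show ?thesis using u by (simp add: power_divide field_simps)
    qed simp
  qed
  also have "\<dots> = poly (PP f n a b d i) u"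
    unfolding PP_def by (simp add: poly_sum poly_monom poly_power)
  finally show ?thesis by simp
qed



lemma eval2_mult: "eval2 (p * q) y1 y2 = eval2 p y1 y2 * eval2 q y1 y2"
  by (simp add: eval2_def)
lemma eval2_add: "eval2 (p + q) y1 y2 = eval2 p y1 y2 + eval2 q y1 y2"
  by (simp add: eval2_def)
lemma eval2_one: "eval2 1 y1 y2 = 1"
  by (simp add: eval2_def)

lemma unit_eval2_nz:
  fixes q :: "'a::field poly poly"
  assumes "q dvd 1" shows "eval2 q y1 y2 \<noteq> 0"
proof -
  obtain q' where "1 = q * q'" using assms by (elim dvdE)
  then have "eval2 q y1 y2 * eval2 q' y1 y2 = 1" by (metis eval2_mult eval2_one)
  then show ?thesis by auto
qed

lemma circle_contained:
  fixes f :: "'a::field_char_0 poly poly" and a b d :: 'a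
  assumes alg: "alg_closed_field TYPE('a)" and irred: "irreducible f" and dnz: "d \<noteq> 0"
    and sub: "{(y1, y2). (y1 - a)^2 + (y2 - b)^2 = d^2} \<subseteq> curve f"
  shows "curve f = {(y1, y2). (y1 - a)^2 + (y2 - b)^2 = d^2}"
proof -
  define g :: "'a poly poly" where "g = [: [:a^2+b^2-d^2, -2*a, 1:], [:-2*b:], 1 :]"
  have eg: "eval2 g y1 y2 = (y1 - a)^2 + (y2 - b)^2 - d^2" for y1 y2
    by (simp add: g_def eval2_def algebra_simps power2_eq_square)
  have g0: "g \<noteq> 0" and dg: "degree g = 2" and lg: "coeff g (degree g) = 1"
    by (auto simp: g_def)
  obtain q r where qr: "pseudo_divmod f g = (q, r)" by (metis surj_pair)
  from pseudo_divmod[OF g0 qr] lg dg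
  have fq: "f = g * q + r" and dr: "r = 0 \<or> degree r < 2" by auto
  have dr1: "degree r \<le> 1" using dr by auto
  have er: "eval2 r y1 y2 = poly (coeff r 0) y1 + y2 * poly (coeff r 1) y1" for y1 y2
  proof -
    have "eval2 r y1 y2 = poly (\<Sum>k\<le>1. coeff r k * [:y2:] ^ k) y1"
      unfolding eval2_def using poly_upto[OF dr1] by metis
    then show ?thesis by (simp add: algebra_simps)
  qed
  have rz: "eval2 r y1 y2 = 0" if "(y1 - a)^2 + (y2 - b)^2 = d^2" for y1 y2
  proof -
    have "eval2 f y1 y2 = 0" using sub that unfolding curve_def by auto
    moreover have "eval2 g y1 y2 = 0" using eg that by simp
    ultimately show ?thesis using fq by (simp add: eval2_add eval2_mult)
  qed
  have both: "poly (coeff r 0) y1 = 0 \<and> poly (coeff r 1) y1 = 0" if y: "y1 \<notin> {a+d, a-d}" for y1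
  proof -
    obtain s where s: "s^2 = d^2 - (y1-a)^2" using sqrt_ex[OF alg] by blast
    have "s \<noteq> 0"
    proof
      assume "s = 0"
      then have "(y1 - a - d) * (y1 - a + d) = 0" using s by (simp add: power2_eq_square algebra_simps)
      then have "y1 - a - d = 0 \<or> y1 - a + d = 0" by (simp only: mult_eq_0_iff)
      moreover have "y1 - a - d = 0 \<Longrightarrow> y1 = a + d" by (simp add: algebra_simps)
      moreover have "y1 - a + d = 0 \<Longrightarrow> y1 = a - d" by (simp add: algebra_simps)
      ultimately have "y1 = a + d \<or> y1 = a - d" by blast
      then show False using y by auto
    qed
    have h1: "eval2 r y1 (b + s) = 0" by (rule rz) (use s in simp)
    have h2: "eval2 r y1 (b - s) = 0" by (rule rz) (use s in simp)
    define R0 where "R0 = poly (coeff r 0) y1"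
    define R1 where "R1 = poly (coeff r 1) y1"
    have e1: "R0 + (b+s) * R1 = 0" using h1 unfolding er R0_def R1_def by (simp add: mult.commute)
    have e2: "R0 + (b-s) * R1 = 0" using h2 unfolding er R0_def R1_def by (simp add: mult.commute)
    have "(2 * s) * R1 = (R0 + (b+s) * R1) - (R0 + (b-s) * R1)" by (simp add: algebra_simps)
    then have "(2 * s) * R1 = 0" using e1 e2 by simp
    then have "R1 = 0" using \<open>s \<noteq> 0\<close> by simp
    then show ?thesis using e1 unfolding R0_def R1_def by simp
  qed
  have zero_poly: "p = 0" if "\<And>y1. y1 \<notin> {a+d, a-d} \<Longrightarrow> poly p y1 = 0" for p :: "'a poly"
  proof (rule ccontr)
    assume "p \<noteq> 0"
    then have "finite {x. poly p x = 0}" by (rule poly_roots_finite)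
    moreover have "UNIV - {a+d, a-d} \<subseteq> {x. poly p x = 0}" using that by auto
    ultimately have "finite (UNIV - {a+d, a-d})" by (rule finite_subset[rotated])
    moreover have "infinite (UNIV - {a+d, a-d})"
      by (rule Diff_infinite_finite) (simp_all add: infinite_UNIV_char_0)
    ultimately show False by blast
  qed
  have "coeff r 0 = 0" "coeff r 1 = 0" using zero_poly both by blast+
  have cz: "coeff r n = 0" for n
  proof (cases "n \<le> 1")
    case True then have "n = 0 \<or> n = 1" by auto
    then show ?thesis using \<open>coeff r 0 = 0\<close> \<open>coeff r 1 = 0\<close> by auto
  next
    case False then show ?thesis using dr1 by (simp add: coeff_eq_0)
  qed
  have r0: "r = 0" using cz by (simp add: poly_eq_iff)
  have fgq: "f = g * q" using fq r0 by simp
  have "\<not> g dvd 1" using unit_eval2_nz[of g "a+d" b] eg[of "a+d" b] by auto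
  then have "q dvd 1" using irreducibleD[OF irred fgq] by blast
  then have "eval2 q y1 y2 \<noteq> 0" for y1 y2 by (rule unit_eval2_nz)
  then show ?thesis unfolding curve_def using fgq eg by (auto simp: eval2_mult)
qed



lemma circle_count:
  fixes f :: "'a::field_char_0 poly poly" and a b d :: 'a
  assumes alg: "alg_closed_field TYPE('a)" and irred: "irreducible f" and dnz: "d \<noteq> 0"
    and neq: "curve f \<noteq> {(y1, y2). (y1 - a)^2 + (y2 - b)^2 = d^2}"
  shows "finite (curve f \<inter> {(y1, y2). (y1 - a)^2 + (y2 - b)^2 = d^2}) \<and>
         card (curve f \<inter> {(y1, y2). (y1 - a)^2 + (y2 - b)^2 = d^2}) \<le> 2 * total_degree f"
proof -
  define circ where "circ = {(y1, y2). (y1 - a)^2 + (y2 - b)^2 = d^2}"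
  obtain i :: 'a where i2: "i^2 = -1" using sqrt_ex[OF alg] by blast
  have inz: "i \<noteq> 0" using i2 by auto
  define n where "n = total_degree f"
  have bnd: "coeff (coeff f k) j \<noteq> 0 \<Longrightarrow> k + j \<le> n" for k j
    unfolding n_def by (rule td_bound)
  define P where "P = PP f n a b d i"
  define pt where "pt u = (poly (Xp a d) u / u, poly (Yp i b d) u / u)" for u
  have Pev: "poly P u = u^n * eval2 f (fst (pt u)) (snd (pt u))" if "u \<noteq> 0" for u
    unfolding P_def pt_def using PP_eval[OF bnd that inz] by simp
  have param: "\<exists>u. u \<noteq> 0 \<and> pt u = (y1, y2)" if "(y1, y2) \<in> circ" for y1 y2
  proof -
    define p where "p = y1 - a"
    define q where "q = y2 - b"
    define u where "u = p + i * q"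
    define v where "v = p - i * q"
    have uv: "u * v = d^2"
    proof -
      have "u * v = p^2 - i^2 * q^2" unfolding u_def v_def by (simp add: algebra_simps power2_eq_square)
      also have "\<dots> = d^2" using i2 that unfolding circ_def p_def q_def by simp
      finally show ?thesis .
    qed
    have unz: "u \<noteq> 0" using uv dnz by auto
    have "poly (Xp a d) u = u * y1"
    proof -
      have "poly (Xp a d) u = d^2/2 + a*u + u^2/2" unfolding Xp_def by (simp add: algebra_simps power2_eq_square)
      also have "\<dots> = u*v/2 + a*u + u^2/2" using uv by simp
      also have "\<dots> = u * (a + (u + v)/2)" by (simp add: algebra_simps power2_eq_square add_divide_distrib)
      also have "(u + v)/2 = p" unfolding u_def v_def by (simp add: field_simps)
      finally show ?thesis unfolding p_def by simp
    qed
    moreover have "poly (Yp i b d) u = u * y2"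
    proof -
      have "poly (Yp i b d) u = -(d^2)/(2*i) + b*u + u^2/(2*i)" unfolding Yp_def by (simp add: algebra_simps power2_eq_square)
      also have "\<dots> = -(u*v)/(2*i) + b*u + u^2/(2*i)" using uv by simp
      also have "\<dots> = u * (b + (u - v)/(2*i))" using inz by (simp add: field_simps power2_eq_square)
      also have "(u - v)/(2*i) = q" unfolding u_def v_def using inz by (simp add: field_simps)
      finally show ?thesis unfolding q_def by simp
    qed
    ultimately have "pt u = (y1, y2)" unfolding pt_def using unz by simp
    then show ?thesis using unz by blast
  qed
  have Pnz: "P \<noteq> 0"
  proof
    assume P0: "P = 0"
    have "circ \<subseteq> curve f"
    proof
      fix y assume "y \<in> circ"
      then obtain y1 y2 where y: "y = (y1, y2)" "(y1, y2) \<in> circ" by (cases y) auto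
      then obtain u where u: "u \<noteq> 0" "pt u = (y1, y2)" using param by blast
      have "u^n * eval2 f y1 y2 = 0" using Pev[OF u(1)] u(2) P0 by simp
      then have "eval2 f y1 y2 = 0" using u(1) by simp
      then show "y \<in> curve f" using y unfolding curve_def by simp
    qed
    then have "curve f = circ" using circle_contained[OF alg irred dnz] unfolding circ_def by blast
    then show False using neq unfolding circ_def by simp
  qed
  have sub: "curve f \<inter> circ \<subseteq> pt ` {u. poly P u = 0}"
  proof
    fix y assume "y \<in> curve f \<inter> circ"
    then obtain y1 y2 where y: "y = (y1, y2)" "(y1, y2) \<in> circ" "eval2 f y1 y2 = 0"
      unfolding curve_def by (cases y) auto
    then obtain u where u: "u \<noteq> 0" "pt u = (y1, y2)" using param by blast
    have "poly P u = 0" using Pev[OF u(1)] u(2) y(3) by simp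
    then show "y \<in> pt ` {u. poly P u = 0}" using u y by force
  qed
  have fin: "finite {u. poly P u = 0}" using Pnz by (rule poly_roots_finite)
  have "card (curve f \<inter> circ) \<le> card (pt ` {u. poly P u = 0})"
    using sub fin by (intro card_mono) auto
  also have "\<dots> \<le> card {u. poly P u = 0}" by (rule card_image_le[OF fin])
  also have "\<dots> \<le> degree P" using Pnz by (rule card_poly_roots_bound)
  also have "\<dots> \<le> 2 * n" unfolding P_def by (rule PP_degree[OF bnd])
  finally show ?thesis using finite_subset[OF sub] fin unfolding circ_def n_def by auto
qed



lemma inv_eq: fixes w N :: "'a::field" assumes "w * N = 1" shows "w = 1 / N"
proof -
  have "N \<noteq> 0" using assms by auto
  then show ?thesis using assms by (simp add: eq_divide_eq)
qed

theorem lemma2: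
  fixes f :: "'a::field_char_0 poly poly" and a b d :: 'a
  assumes alg_closed: "alg_closed_field TYPE('a)"
    and irred: "irreducible f"
    and d_nz: "d \<noteq> 0"
  defines "B \<equiv> incidence_B f (a, b) d"
    and "C0 \<equiv> {(p1, p2) \<in> curve f. (p1 - a)^2 + (p2 - b)^2 \<noteq> 0}"
  shows "(curve f \<noteq> {(y1, y2). (y1 - a)^2 + (y2 - b)^2 = d^2} \<longrightarrow>
           (\<forall>x \<in> pi1 ` B - {(a, b)}.
              finite (B \<inter> pi1 -` {x}) \<and> card (B \<inter> pi1 -` {x}) \<le> 2) \<and>
           ((a, b) \<in> pi1 ` B \<longrightarrow>
              finite (B \<inter> pi1 -` {(a, b)}) \<and>
              card (B \<inter> pi1 -` {(a, b)}) \<le> 2 * total_degree f))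
       \<and> (\<forall>y \<in> C0. card (B \<inter> pi2 -` {y}) = 2)"
proof (intro conjI impI ballI)
  fix x assume xB: "x \<in> pi1 ` B - {(a, b)}"
  obtain x1 x2 where x: "x = (x1, x2)" by (cases x)
  define e1 where "e1 = x1 - a"
  define e2 where "e2 = x2 - b"
  have enz: "(e1, e2) \<noteq> (0, 0)" using xB x unfolding e1_def e2_def by auto
  define Ne where "Ne = e1^2 + e2^2"
  define h where "h t = (x, (x1 - t*e1, x2 - t*e2), 1/((x1 - t*e1 - a)^2 + (x2 - t*e2 - b)^2))" for t
  have sub: "B \<inter> pi1 -` {x} \<subseteq> h ` {t. t^2 = d^2/Ne}"
  proof
    fix el assume el: "el \<in> B \<inter> pi1 -` {x}"
    obtain x1' x2' y1 y2 w where el_eq: "el = ((x1', x2'), (y1, y2), w)" by (metis prod.collapse)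
    have xx: "x1' = x1" "x2' = x2" using el el_eq x unfolding pi1_def by auto
    have eB: "(x1 - y1)^2 + (x2 - y2)^2 = d^2"
      "(y2 - b) * (x1 - y1) - (y1 - a) * (x2 - y2) = 0"
      "w * ((y1 - a)^2 + (y2 - b)^2) = 1"
      using el el_eq xx unfolding B_def incidence_B_def by auto
    have "(e2 - (x2 - y2)) * (x1 - y1) - (e1 - (x1 - y1)) * (x2 - y2) = 0"
      using eB(2) unfolding e1_def e2_def by (simp add: algebra_simps)
    then have "e2 * (x1 - y1) = e1 * (x2 - y2)" by (simp add: algebra_simps)
    then obtain t where t: "x1 - y1 = t * e1" "x2 - y2 = t * e2" using par[OF enz] by blast
    have "t^2 * Ne = d^2" using eB(1) t unfolding Ne_def by (simp add: algebra_simps power2_eq_square)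
    moreover have "Ne \<noteq> 0" using calculation d_nz by auto
    ultimately have t2: "t^2 = d^2/Ne" by (simp add: field_simps)
    have y: "y1 = x1 - t*e1" "y2 = x2 - t*e2" using t by (simp_all add: algebra_simps)
    have "w = 1/((y1 - a)^2 + (y2 - b)^2)" using eB(3) by (rule inv_eq)
    then have "el = h t" unfolding h_def el_eq using xx x y by simp
    then show "el \<in> h ` {t. t^2 = d^2/Ne}" using t2 by blast
  qed
  have "finite {t. t^2 = d^2/Ne}" "card {t. t^2 = d^2/Ne} \<le> 2" using sq_eq_card by auto
  then show "finite (B \<inter> pi1 -` {x})" "card (B \<inter> pi1 -` {x}) \<le> 2"
    using sub finite_subset card_mono card_image_le
    by (metis finite_imageI order_trans)+
next
  assume neq: "curve f \<noteq> {(y1, y2). (y1 - a)^2 + (y2 - b)^2 = d^2}"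
  define circ where "circ = {(y1, y2). (y1 - a)^2 + (y2 - b)^2 = d^2}"
  have cc: "finite (curve f \<inter> circ)" "card (curve f \<inter> circ) \<le> 2 * total_degree f"
    using circle_count[OF alg_closed irred d_nz neq] unfolding circ_def by auto
  define h where "h y = ((a, b), y, 1/d^2)" for y :: "'a \<times> 'a"
  have sub: "B \<inter> pi1 -` {(a, b)} \<subseteq> h ` (curve f \<inter> circ)"
  proof
    fix el assume el: "el \<in> B \<inter> pi1 -` {(a, b)}"
    obtain x1' x2' y1 y2 w where el_eq: "el = ((x1', x2'), (y1, y2), w)" by (metis prod.collapse)
    have xx: "x1' = a" "x2' = b" using el el_eq unfolding pi1_def by auto
    have eB: "eval2 f y1 y2 = 0" "(a - y1)^2 + (b - y2)^2 = d^2"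
      "w * ((y1 - a)^2 + (y2 - b)^2) = 1"
      using el el_eq xx unfolding B_def incidence_B_def by auto
    have c: "(y1 - a)^2 + (y2 - b)^2 = d^2" using eB(2) by (simp add: power2_commute)
    then have "w = 1/d^2" using eB(3) d_nz by (simp add: field_simps)
    then have "el = h (y1, y2)" unfolding h_def el_eq xx by simp
    moreover have "(y1, y2) \<in> curve f \<inter> circ" using eB(1) c unfolding curve_def circ_def by simp
    ultimately show "el \<in> h ` (curve f \<inter> circ)" by blast
  qed
  show "finite (B \<inter> pi1 -` {(a, b)})" using sub cc(1) by (meson finite_imageI finite_subset)
  show "card (B \<inter> pi1 -` {(a, b)}) \<le> 2 * total_degree f"
    using sub cc by (meson card_image_le card_mono finite_imageI order_trans)
next
  fix y assume yC: "y \<in> C0"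
  obtain y1 y2 where y: "y = (y1, y2)" by (cases y)
  define p1 where "p1 = y1 - a"
  define p2 where "p2 = y2 - b"
  define Np where "Np = p1^2 + p2^2"
  have Npnz: "Np \<noteq> 0" and ev: "eval2 f y1 y2 = 0"
    using yC y unfolding C0_def Np_def p1_def p2_def curve_def by auto
  have pnz: "(p1, p2) \<noteq> (0, 0)" using Npnz unfolding Np_def by auto
  obtain r where r: "r^2 = d^2/Np" using sqrt_ex[OF alg_closed] by blast
  have rnz: "r \<noteq> 0" using r d_nz Npnz by auto
  define el1 where "el1 = ((y1 + r*p1, y2 + r*p2), (y1, y2), 1/Np)"
  define el2 where "el2 = ((y1 - r*p1, y2 - r*p2), (y1, y2), 1/Np)"
  have rNp: "r^2 * Np = d^2" using r Npnz by (simp add: field_simps)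
  have "B \<inter> pi2 -` {y} = {el1, el2}"
  proof (intro equalityI subsetI)
    fix el assume el: "el \<in> B \<inter> pi2 -` {y}"
    obtain x1 x2 y1' y2' w where el_eq: "el = ((x1, x2), (y1', y2'), w)" by (metis prod.collapse)
    have yy: "y1' = y1" "y2' = y2" using el el_eq y unfolding pi2_def by auto
    have eB: "(x1 - y1)^2 + (x2 - y2)^2 = d^2"
      "(y2 - b) * (x1 - y1) - (y1 - a) * (x2 - y2) = 0"
      "w * ((y1 - a)^2 + (y2 - b)^2) = 1"
      using el el_eq yy unfolding B_def incidence_B_def by auto
    have "p2 * (x1 - y1) = p1 * (x2 - y2)" using eB(2) unfolding p1_def p2_def by simp
    then obtain t where t: "x1 - y1 = t * p1" "x2 - y2 = t * p2" using par[OF pnz] by blast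
    have "t^2 * Np = d^2" using eB(1) t unfolding Np_def by (simp add: algebra_simps power2_eq_square)
    then have "t^2 * Np = r^2 * Np" using rNp by simp
    then have "t^2 = r^2" using Npnz by simp
    then have "(t - r) * (t + r) = 0" by (simp add: algebra_simps power2_eq_square)
    then have tr: "t = r \<or> t = -r" by (auto simp: eq_neg_iff_add_eq_0)
    have w: "w = 1/Np" using inv_eq[OF eB(3)] unfolding Np_def p1_def p2_def by simp
    have x: "x1 = y1 + t*p1" "x2 = y2 + t*p2" using t by (simp_all add: algebra_simps)
    show "el \<in> {el1, el2}" using tr unfolding el_eq yy x w el1_def el2_def by auto
  next
    fix el assume el12: "el \<in> {el1, el2}"
    have e1: "el1 = ((y1 + r*p1, y2 + r*p2), (y1, y2), 1/Np)" by (simp add: el1_def)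
    have e2: "el2 = ((y1 + (-r)*p1, y2 + (-r)*p2), (y1, y2), 1/Np)" by (simp add: el2_def)
    have "\<exists>s. (s = r \<or> s = -r) \<and> el = ((y1 + s*p1, y2 + s*p2), (y1, y2), 1/Np)"
    proof (cases "el = el1")
      case True then show ?thesis using e1 by (intro exI[of _ r]) simp
    next
      case False then have "el = el2" using el12 by simp
      then show ?thesis using e2 by (intro exI[of _ "-r"]) (simp only: refl simp_thms)
    qed
    then obtain s where s: "s = r \<or> s = -r" "el = ((y1 + s*p1, y2 + s*p2), (y1, y2), 1/Np)"
      by iprover
    have s2: "s^2 = r^2" using s(1) by auto
    have "(y1 + s*p1 - y1)^2 + (y2 + s*p2 - y2)^2 = d^2"
      using s2 rNp unfolding Np_def by (simp add: algebra_simps power2_eq_square)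
    moreover have "(y2 - b) * (y1 + s*p1 - y1) - (y1 - a) * (y2 + s*p2 - y2) = 0"
      unfolding p1_def p2_def by (simp add: algebra_simps)
    moreover have "1/Np * ((y1 - a)^2 + (y2 - b)^2) = 1"
      using Npnz unfolding Np_def p1_def p2_def by simp
    ultimately show "el \<in> B \<inter> pi2 -` {y}"
      unfolding s(2) B_def incidence_B_def pi2_def y using ev by simp
  qed
  moreover have "el1 \<noteq> el2"
  proof
    assume "el1 = el2"
    then have q1: "y1 + r*p1 = y1 - r*p1" and q2: "y2 + r*p2 = y2 - r*p2"
      unfolding el1_def el2_def by simp_all
    have "2*(r*p1) = (y1 + r*p1) - (y1 - r*p1)" "2*(r*p2) = (y2 + r*p2) - (y2 - r*p2)"
      by (simp_all add: algebra_simps)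
    then have "2*(r*p1) = 0" "2*(r*p2) = 0" using q1 q2 by simp_all
    then have "p1 = 0" "p2 = 0" using rnz by simp_all
    then show False using pnz by simp
  qed
  ultimately show "card (B \<inter> pi2 -` {y}) = 2" by simp
qed

end
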